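(* Let $\mathcal{F}(\mathsf{REG},\mathsf{REG})$ be the class of all languages $L(\Phi)$ generated by F-systems $\Phi=(L_1,L_2)$ in which both the core language $L_1$ and the folding procedure language $L_2$ are regular. Then $\mathcal{F}(\mathsf{REG},\mathsf{REG})\neq\mathsf{LIN}$; specifically, the linear language $L$ over $\{a,b,c,d,e,f,\#\}$ generated by the grammar $S\to S_1\mid S_2$, $S_1\to aS_1bc\mid a\#bc$, $S_2\to deS_2f\mid de\#f$ (that is, $L=\{a^n\#(bc)^n\mid n\ge1\}\cup\{(de)^n\#f^n\mid n\ge1\}$) is not in $\mathcal{F}(\mathsf{REG},\mathsf{REG})$.
   Context: Let $\Sigma$ be a finite alphabet and $\Gamma=\{\mathtt{u},\mathtt{d}\}$. Define $f:\Sigma^*\times\Sigma\times\Gamma\to\Sigma^*$ by $f(x,a,\mathtt{u})=ax$ and $f(x,a,\mathtt{d})=xa$. The folding function $h:\Sigma^*\times\Gamma^*\to\Sigma^*$ is the partial function with $h(\varepsilon,\varepsilon)=\varepsilon$; if $|w|=|v|>0$ with $w=w'a$ ($a\in\Sigma$) and $v=v'b$ ($b\in\Gamma$), then $h(w,v)=f(h(w',v'),a,b)$; and $h(w,v)$ is undefined if $|w|\neq|v|$. An F-system is a pair $\Phi=(L_1,L_2)$ with $L_1\subseteq\Sigma^*$ and $L_2\subseteq\Gamma^*$; its language is $L(\Phi)=\{h(w,v)\mid w\in L_1, v\in L_2, |w|=|v|\}$. A linear grammar is a context-free grammar all of whose rules have the form $A\to uBv$ or $A\to u$ with $u,v$ terminal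 words and $A,B$ nonterminals; $\mathsf{LIN}$ is the class of languages generated by linear grammars, and $\mathsf{REG}$ the class of regular languages. *)

theory Defs
  imports Main
begin

datatype 'a rexp = Zero | One | Atom 'a | Plus "'a rexp" "'a rexp"
  | Times "'a rexp" "'a rexp" | Star "'a rexp"

inductive_set star_lang :: "'a list set \<Rightarrow> 'a list set" for A where
  star_Nil: "[] \<in> star_lang A"
| star_app: "u \<in> A \<Longrightarrow> w \<in> star_lang A \<Longrightarrow> u @ w \<in> star_lang A"

fun rlang :: "'a rexp \<Rightarrow> 'a list set" where
  "rlang Zero = {}"
| "rlang One = {[]}"
| "rlang (Atom a) = {[a]}"
| "rlang (Plus r s) = rlang r \<union> rlang s"
| "rlang (Times r s) = {u @ v | u v. u \<in> rlang r \<and> v \<in> rlang s}"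
| "rlang (Star r) = star_lang (rlang r)"

definition regular :: "'a list set \<Rightarrow> bool" where
  "regular L \<longleftrightarrow> (\<exists>r. rlang r = L)"

datatype dir = Up | Down

fun fstep :: "'a list \<Rightarrow> 'a \<Rightarrow> dir \<Rightarrow> 'a list" where
  "fstep x a Up = a # x"
| "fstep x a Down = x @ [a]"

text \<open>The folding function h as a partial function: h(eps,eps)=eps,
  h(w'a, v'b) = f(h(w',v'), a, b), undefined on words of different length.\<close>
definition fold_h :: "'a list \<Rightarrow> dir list \<Rightarrow> 'a list option" where
  "fold_h w v = (if length w = length v
     then Some (foldl (\<lambda>x (a, b). fstep x a b) [] (zip w v)) else None)"

definition F_lang :: "'a list set \<Rightarrow> dir list set \<Rightarrow> 'a list set" where
  "F_lang L1 L2 = {the (fold_h w v) | w v. w \<in> L1 \<and> v \<in> L2 \<and> length w = length v}"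

definition F_REG_REG :: "'a list set set" where
  "F_REG_REG = {F_lang L1 L2 | L1 L2. regular L1 \<and> regular L2}"

text \<open>A rule (A, u, Some (B, v)) stands for A -> u B v, and (A, u, None) for A -> u.
  Nonterminals are natural numbers; a grammar is a finite set of rules and a start symbol.\<close>
type_synonym 't lin_rule = "nat \<times> 't list \<times> (nat \<times> 't list) option"

inductive lin_gen :: "'t lin_rule set \<Rightarrow> nat \<Rightarrow> 't list \<Rightarrow> bool" for R where
  term_rule: "(A, u, None) \<in> R \<Longrightarrow> lin_gen R A u"
| lin_rule: "(A, u, Some (B, v)) \<in> R \<Longrightarrow> lin_gen R B w \<Longrightarrow> lin_gen R A (u @ w @ v)"

definition lin_lang :: "'t lin_rule set \<Rightarrow> nat \<Rightarrow> 't list set" where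
  "lin_lang R S = {w. lin_gen R S w}"

definition LIN :: "'t list set set" where
  "LIN = {lin_lang R S | R S. finite R}"

datatype sym = a | b | c | d | e | f | Hash

text \<open>Grammar: S = 0, S1 = 1, S2 = 2.
  S -> S1 | S2,  S1 -> a S1 b c | a # b c,  S2 -> d e S2 f | d e # f\<close>
definition G :: "sym lin_rule set" where
  "G = {(0, [], Some (1, [])), (0, [], Some (2, [])),
        (1, [a], Some (1, [b, c])), (1, [a, Hash, b, c], None),
        (2, [d, e], Some (2, [f])), (2, [d, e, Hash, f], None)}"

definition L_ex :: "sym list set" where
  "L_ex = {replicate n a @ [Hash] @ concat (replicate n [b, c]) | n. n \<ge> 1}
        \<union> {concat (replicate n [d, e]) @ [Hash] @ replicate n f | n. n \<ge> 1}"

end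

theory Submission
  imports Defs
begin


definition cnt :: "'x \<Rightarrow> 'x list \<Rightarrow> nat" where
  "cnt s y = length (filter (\<lambda>z. z = s) y)"

lemma cnt_append[simp]: "cnt s (y @ z) = cnt s y + cnt s z"
  by (simp add: cnt_def)
lemma cnt_rev[simp]: "cnt s (rev y) = cnt s y"
  by (simp add: cnt_def rev_filter[symmetric])
lemma cnt_Cons[simp]: "cnt s (z # y) = (if z = s then Suc (cnt s y) else cnt s y)"
  by (simp add: cnt_def)
lemma cnt_Nil[simp]: "cnt s [] = 0"
  by (simp add: cnt_def)
lemma cnt_replicate[simp]: "cnt s (replicate n z) = (if z = s then n else 0)"
  by (induction n) auto
lemma cnt_concat_rep[simp]: "cnt s (concat (replicate n y)) = n * cnt s y"
  by (induction n) auto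
lemma cnt_pos: "s \<in> set y \<Longrightarrow> cnt s y > 0"
  by (induction y) auto
lemma cnt_zero: "s \<notin> set y \<Longrightarrow> cnt s y = 0"
  by (induction y) auto

abbreviation upl :: "('x \<times> dir) list \<Rightarrow> 'x list" where
  "upl zs \<equiv> map fst (filter (\<lambda>p. snd p = Up) zs)"
abbreviation dnl :: "('x \<times> dir) list \<Rightarrow> 'x list" where
  "dnl zs \<equiv> map fst (filter (\<lambda>p. snd p = Down) zs)"

lemma foldl_formula: "foldl (\<lambda>x (y, z). fstep x y z) [] zs = rev (upl zs) @ dnl zs"
proof (induction zs rule: rev_induct)
  case Nil
  then show ?case by simp
next
  case (snoc p zs)
  then show ?case by (cases p; cases "snd p") auto
qed

lemma fold_h_eq: "length w = length v \<Longrightarrow> the (fold_h w v) = rev (upl (zip w v)) @ dnl (zip w v)"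
  by (simp add: fold_h_def foldl_formula)

lemma cnt_updn: "cnt s (upl zs) + cnt s (dnl zs) = cnt s (map fst zs)"
proof (induction zs)
  case Nil
  then show ?case by simp
next
  case (Cons p zs)
  then show ?case by (cases p; cases "snd p") auto
qed

lemma len_updn: "length (upl zs) + length (dnl zs) = length zs"
proof (induction zs)
  case Nil
  then show ?case by simp
next
  case (Cons p zs)
  then show ?case by (cases p; cases "snd p") auto
qed

lemma cnt_fold: "length w = length v \<Longrightarrow> cnt s (the (fold_h w v)) = cnt s w"
  using cnt_updn[of s "zip w v"] by (simp add: fold_h_eq)

lemma len_fold: "length w = length v \<Longrightarrow> length (the (fold_h w v)) = length w"
  using len_updn[of "zip w v"] by (simp add: fold_h_eq)

lemma len_up: "length w = length v \<Longrightarrow> length (upl (zip w v)) = length (filter (\<lambda>x. x = Up) v)"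
  by (induction w v rule: list_induct2) auto

definition lq :: "'x list \<Rightarrow> 'x list set \<Rightarrow> 'x list set" where
  "lq u L = {y. u @ y \<in> L}"
definition Qs :: "'x list set \<Rightarrow> 'x list set set" where
  "Qs L = range (\<lambda>u. lq u L)"
definition conc :: "'x list set \<Rightarrow> 'x list set \<Rightarrow> 'x list set" where
  "conc A B = {u @ v | u v. u \<in> A \<and> v \<in> B}"

lemma lq_Un: "lq u (A \<union> B) = lq u A \<union> lq u B"
  by (auto simp: lq_def)

lemma lq_conc: "lq u (conc A B) = conc (lq u A) B \<union> \<Union> {lq u2 B | u1 u2. u = u1 @ u2 \<and> u1 \<in> A}"
proof (intro equalityI subsetI)
  fix y assume "y \<in> lq u (conc A B)"
  then obtain s t where st: "u @ y = s @ t" "s \<in> A" "t \<in> B" by (auto simp: lq_def conc_def)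
  then consider us where "s = u @ us" "y = us @ t" | us where "u = s @ us" "us @ y = t"
    by (auto simp: append_eq_append_conv2)
  then show "y \<in> conc (lq u A) B \<union> \<Union> {lq u2 B | u1 u2. u = u1 @ u2 \<and> u1 \<in> A}"
  proof cases
    case 1
    then show ?thesis using st by (auto simp: lq_def conc_def)
  next
    case 2
    then have "y \<in> lq us B" "u = s @ us" using st by (auto simp: lq_def)
    then show ?thesis using st(2) by blast
  qed
next
  fix y assume "y \<in> conc (lq u A) B \<union> \<Union> {lq u2 B | u1 u2. u = u1 @ u2 \<and> u1 \<in> A}"
  then show "y \<in> lq u (conc A B)"
    by (auto simp: lq_def conc_def) (metis append.assoc)+
qed

lemma star_append: "x \<in> star_lang A \<Longrightarrow> y \<in> star_lang A \<Longrightarrow> x @ y \<in> star_lang A"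
  by (induction rule: star_lang.induct) (auto intro: star_lang.intros)

lemma star_split: "w \<in> star_lang A \<Longrightarrow> w = u @ y \<Longrightarrow>
   (u \<in> star_lang A \<and> y \<in> star_lang A) \<or>
   (\<exists>u1 u2 z q. u = u1 @ u2 \<and> u1 \<in> star_lang A \<and> u2 @ z \<in> A \<and> q \<in> star_lang A \<and> y = z @ q)"
proof (induction arbitrary: u rule: star_lang.induct)
  case star_Nil
  then show ?case by (auto intro: star_lang.intros)
next
  case (star_app s t)
  from star_app.prems consider us where "s = u @ us" "y = us @ t" | us where "u = s @ us" "us @ y = t"
    by (auto simp: append_eq_append_conv2)
  then show ?case
  proof cases
    case 1
    then show ?thesis using star_app by (metis self_append_conv2 star_lang.star_Nil)
  next
    case 2
    from star_app.IH[OF 2(2)[symmetric]] show ?thesis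
    proof
      assume "us \<in> star_lang A \<and> y \<in> star_lang A"
      then show ?thesis using 2 star_app by (auto intro: star_lang.intros)
    next
      assume "\<exists>u1 u2 z q. us = u1 @ u2 \<and> u1 \<in> star_lang A \<and> u2 @ z \<in> A \<and> q \<in> star_lang A \<and> y = z @ q"
      then obtain u1 u2 z q where "us = u1 @ u2" "u1 \<in> star_lang A" "u2 @ z \<in> A" "q \<in> star_lang A" "y = z @ q"
        by blast
      then show ?thesis using 2 star_app
        by (intro disjI2 exI[of _ "s @ u1"] exI[of _ u2] exI[of _ z] exI[of _ q]) (auto intro: star_lang.intros)
    qed
  qed
qed

lemma lq_star: "lq u (star_lang A) = (if u \<in> star_lang A then star_lang A else {}) \<union>
   \<Union> ((\<lambda>X. conc X (star_lang A)) ` {lq u2 A | u1 u2. u = u1 @ u2 \<and> u1 \<in> star_lang A})"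
proof (intro equalityI subsetI)
  fix y assume "y \<in> lq u (star_lang A)"
  then have "u @ y \<in> star_lang A" by (simp add: lq_def)
  from star_split[OF this refl] show "y \<in> (if u \<in> star_lang A then star_lang A else {}) \<union>
   \<Union> ((\<lambda>X. conc X (star_lang A)) ` {lq u2 A | u1 u2. u = u1 @ u2 \<and> u1 \<in> star_lang A})"
    by (auto simp: lq_def conc_def)
next
  fix y assume "y \<in> (if u \<in> star_lang A then star_lang A else {}) \<union>
   \<Union> ((\<lambda>X. conc X (star_lang A)) ` {lq u2 A | u1 u2. u = u1 @ u2 \<and> u1 \<in> star_lang A})"
  then show "y \<in> lq u (star_lang A)"
  proof (cases "y \<in> (if u \<in> star_lang A then star_lang A else {})")
    case True
    then show ?thesis by (auto simp: lq_def split: if_splits intro: star_append)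
  next
    case False
    with \<open>y \<in> _\<close> obtain u1 u2 z q where "u = u1 @ u2" "u1 \<in> star_lang A" "u2 @ z \<in> A" "q \<in> star_lang A" "y = z @ q"
      by (auto simp: lq_def conc_def)
    then show ?thesis
      by (simp add: lq_def) (metis append.assoc star_append star_lang.star_app)
  qed
qed

lemma finite_Qs: "finite (Qs (rlang r))"
proof (induction r)
  case Zero
  have "Qs (rlang Zero) \<subseteq> {{}}" by (auto simp: Qs_def lq_def)
  then show ?case using finite_subset by blast
next
  case One
  have "Qs (rlang One) \<subseteq> {{[]}, {}}" by (auto simp: Qs_def lq_def)
  then show ?case using finite_subset by blast
next
  case (Atom x)
  have "\<And>u. lq u {[x]} = (if u = [] then {[x]} else if u = [x] then {[]} else {})"
    by (auto simp: lq_def append_eq_Cons_conv)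
  then have "Qs (rlang (Atom x)) \<subseteq> {{[x]}, {[]}, {}}" by (auto simp: Qs_def)
  then show ?case using finite_subset by blast
next
  case (Plus r s)
  have "Qs (rlang (Plus r s)) \<subseteq> (\<lambda>(X, Y). X \<union> Y) ` (Qs (rlang r) \<times> Qs (rlang s))"
    by (auto simp: Qs_def lq_Un)
  then show ?case using Plus finite_subset by blast
next
  case (Times r s)
  have eq: "rlang (Times r s) = conc (rlang r) (rlang s)" by (simp add: conc_def)
  have "Qs (rlang (Times r s)) \<subseteq> (\<lambda>(X, Ys). conc X (rlang s) \<union> \<Union> Ys) ` (Qs (rlang r) \<times> Pow (Qs (rlang s)))"
  proof
    fix Z assume "Z \<in> Qs (rlang (Times r s))"
    then obtain u where "Z = lq u (rlang (Times r s))" unfolding Qs_def by blast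
    then have "Z = conc (lq u (rlang r)) (rlang s) \<union> \<Union> {lq u2 (rlang s) | u1 u2. u = u1 @ u2 \<and> u1 \<in> rlang r}"
      using lq_conc[of u "rlang r" "rlang s"] by (simp only: eq)
    moreover have "{lq u2 (rlang s) | u1 u2. u = u1 @ u2 \<and> u1 \<in> rlang r} \<subseteq> Qs (rlang s)"
      unfolding Qs_def by blast
    moreover have "lq u (rlang r) \<in> Qs (rlang r)" unfolding Qs_def by blast
    ultimately have m: "(lq u (rlang r), {lq u2 (rlang s) | u1 u2. u = u1 @ u2 \<and> u1 \<in> rlang r}) \<in> Qs (rlang r) \<times> Pow (Qs (rlang s))"
      and z: "Z = (\<lambda>(X, Ys). conc X (rlang s) \<union> \<Union> Ys) (lq u (rlang r), {lq u2 (rlang s) | u1 u2. u = u1 @ u2 \<and> u1 \<in> rlang r})"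
      by (blast, simp only: prod.case)
    show "Z \<in> (\<lambda>(X, Ys). conc X (rlang s) \<union> \<Union> Ys) ` (Qs (rlang r) \<times> Pow (Qs (rlang s)))"
      unfolding z by (rule imageI[OF m])
  qed
  moreover have "finite ((\<lambda>(X, Ys). conc X (rlang s) \<union> \<Union> Ys) ` (Qs (rlang r) \<times> Pow (Qs (rlang s))))"
    using Times.IH by simp
  ultimately show ?case by (rule finite_subset)
next
  case (Star r)
  let ?S = "star_lang (rlang r)"
  have "Qs (rlang (Star r)) \<subseteq> (\<lambda>(bo, Ys). (if bo then ?S else {}) \<union> \<Union> ((\<lambda>X. conc X ?S) ` Ys)) ` (UNIV \<times> Pow (Qs (rlang r)))"
  proof
    fix Z assume "Z \<in> Qs (rlang (Star r))"
    then obtain u where "Z = lq u ?S" unfolding Qs_def by auto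
    then have "Z = (if u \<in> ?S then ?S else {}) \<union>
       \<Union> ((\<lambda>X. conc X ?S) ` {lq u2 (rlang r) | u1 u2. u = u1 @ u2 \<and> u1 \<in> ?S})"
      using lq_star by blast
    moreover have "{lq u2 (rlang r) | u1 u2. u = u1 @ u2 \<and> u1 \<in> ?S} \<subseteq> Qs (rlang r)"
      unfolding Qs_def by blast
    ultimately have m: "(u \<in> ?S, {lq u2 (rlang r) | u1 u2. u = u1 @ u2 \<and> u1 \<in> ?S}) \<in> UNIV \<times> Pow (Qs (rlang r))"
      and z: "Z = (\<lambda>(bo, Ys). (if bo then ?S else {}) \<union> \<Union> ((\<lambda>X. conc X ?S) ` Ys)) (u \<in> ?S, {lq u2 (rlang r) | u1 u2. u = u1 @ u2 \<and> u1 \<in> ?S})"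
      by (blast, simp only: prod.case)
    show "Z \<in> (\<lambda>(bo, Ys). (if bo then ?S else {}) \<union> \<Union> ((\<lambda>X. conc X ?S) ` Ys)) ` (UNIV \<times> Pow (Qs (rlang r)))"
      unfolding z by (rule imageI[OF m])
  qed
  moreover have "finite ((\<lambda>(bo, Ys). (if bo then ?S else {}) \<union> \<Union> ((\<lambda>X. conc X ?S) ` Ys)) ` (UNIV \<times> Pow (Qs (rlang r))))"
    using Star.IH by simp
  ultimately show ?case by (rule finite_subset)
qed




lemma regular_finite_Qs: "regular L \<Longrightarrow> finite (Qs L)"
  using finite_Qs unfolding regular_def by blast

definition delprop :: "sym list set \<Rightarrow> dir list set \<Rightarrow> nat \<Rightarrow> bool" where
  "delprop L1 L2 N \<longleftrightarrow> (\<forall>w v. w \<in> L1 \<longrightarrow> v \<in> L2 \<longrightarrow> length w = length v \<longrightarrow> N \<le> length w \<longrightarrow>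
     (\<exists>w' v' sg. w' \<in> L1 \<and> v' \<in> L2 \<and> length w' = length v' \<and> (\<forall>s. cnt s w = cnt s w' + cnt s sg)
        \<and> sg \<noteq> [] \<and> set sg \<subseteq> set (take N w)))"

lemma del:
  assumes fin: "finite (Qs L1)" "finite (Qs L2)"
  shows "delprop L1 L2 (card (Qs L1 \<times> Qs L2))"
  unfolding delprop_def
proof (intro allI impI)
  fix w v
  assume wv: "w \<in> L1" "v \<in> L2" "length w = length v" "card (Qs L1 \<times> Qs L2) \<le> length w"
  define N where "N = card (Qs L1 \<times> Qs L2)"
  define g where "g i = (lq (take i w) L1, lq (take i v) L2)" for i
  have sub: "g ` {0..N} \<subseteq> Qs L1 \<times> Qs L2" by (auto simp: g_def Qs_def)
  have "\<not> inj_on g {0..N}"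
  proof
    assume "inj_on g {0..N}"
    then have "card (g ` {0..N}) = N + 1" by (simp add: card_image)
    moreover have "card (g ` {0..N}) \<le> card (Qs L1 \<times> Qs L2)"
      using card_mono[OF _ sub] fin by blast
    moreover have "card (Qs L1 \<times> Qs L2) = N" by (simp add: N_def)
    ultimately show False by simp
  qed
  then obtain i j where ij: "i \<in> {0..N}" "j \<in> {0..N}" "i \<noteq> j" "g i = g j"
    unfolding inj_on_def by blast
  obtain i j where ij: "i < j" "j \<le> N" "g i = g j"
  proof (cases "i < j")
    case True
    then show ?thesis using that ij by auto
  next
    case False
    then show ?thesis using that[of j i] ij by auto
  qed
  have jw: "j \<le> length w" using ij wv N_def by simp
  define w' where "w' = take i w @ drop j w"
  define v' where "v' = take i v @ drop j v"
  define sg where "sg = drop i (take j w)"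
  have "drop j w \<in> lq (take j w) L1" using wv by (simp add: lq_def)
  then have "drop j w \<in> lq (take i w) L1" using ij by (simp add: g_def)
  then have w'L: "w' \<in> L1" by (simp add: w'_def lq_def)
  have "drop j v \<in> lq (take j v) L2" using wv by (simp add: lq_def)
  then have "drop j v \<in> lq (take i v) L2" using ij by (simp add: g_def)
  then have v'L: "v' \<in> L2" by (simp add: v'_def lq_def)
  have len: "length w' = length v'" using wv jw ij by (simp add: w'_def v'_def)
  have "take j w = take i w @ sg"
    using ij by (metis append_take_drop_id sg_def take_take min.absorb1 less_imp_le)
  then have "w = take i w @ sg @ drop j w" by (metis append.assoc append_take_drop_id)
  then have c: "\<forall>s. cnt s w = cnt s w' + cnt s sg" unfolding w'_def
    by (metis add.commute add.left_commute cnt_append)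
  have ne: "sg \<noteq> []" using ij jw by (simp add: sg_def)
  have "set sg \<subseteq> set (take j w)" unfolding sg_def by (rule set_drop_subset)
  also have "\<dots> \<subseteq> set (take N w)" using ij(2) by (rule set_take_subset_set_take)
  finally show "\<exists>w' v' sg. w' \<in> L1 \<and> v' \<in> L2 \<and> length w' = length v' \<and> (\<forall>s. cnt s w = cnt s w' + cnt s sg)
        \<and> sg \<noteq> [] \<and> set sg \<subseteq> set (take (card (Qs L1 \<times> Qs L2)) w)"
    using w'L v'L len c ne N_def by blast
qed

lemma del_L:
  assumes H: "L_ex = F_lang L1 L2" and D: "delprop L1 L2 N"
    and wv: "w \<in> L1" "v \<in> L2" "length w = length v" "N \<le> length w"
  shows "\<exists>y sg. y \<in> L_ex \<and> sg \<noteq> [] \<and> set sg \<subseteq> set (take N w) \<and> (\<forall>s. cnt s w = cnt s y + cnt s sg)"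
proof -
  obtain w' v' sg where *: "w' \<in> L1" "v' \<in> L2" "length w' = length v'" "\<forall>s. cnt s w = cnt s w' + cnt s sg"
    "sg \<noteq> []" "set sg \<subseteq> set (take N w)"
    using D wv unfolding delprop_def by blast
  have "the (fold_h w' v') \<in> L_ex" using * H unfolding F_lang_def by blast
  moreover have "\<forall>s. cnt s (the (fold_h w' v')) = cnt s w'" using *(3) cnt_fold by auto
  ultimately show ?thesis using * by metis
qed

lemma take_filter_in: "x \<in> set (take N zs) \<Longrightarrow> P x \<Longrightarrow> x \<in> set (take N (filter P zs))"
proof (induction zs arbitrary: N)
  case Nil
  then show ?case by simp
next
  case (Cons y zs)
  then show ?case
  proof (cases N)
    case 0
    then show ?thesis using Cons by simp
  next
    case (Suc M)
    then show ?thesis using Cons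
      by (auto dest: set_mp[OF set_take_subset_set_take[of M "Suc M"], rotated])
  qed
qed

lemma il1: "length w = length v \<Longrightarrow> set (take N w) \<subseteq> set (take N (upl (zip w v))) \<union> set (dnl (zip w v))"
proof
  fix x assume l: "length w = length v" and x: "x \<in> set (take N w)"
  have "w = map fst (zip w v)" using l by simp
  then have "x \<in> fst ` set (take N (zip w v))" using x by (metis set_map take_map)
  then obtain p where p: "p \<in> set (take N (zip w v))" "x = fst p" by blast
  show "x \<in> set (take N (upl (zip w v))) \<union> set (dnl (zip w v))"
  proof (cases "snd p")
    case Up
    then have "p \<in> set (take N (filter (\<lambda>p. snd p = Up) (zip w v)))" using take_filter_in p by metis
    then show ?thesis using p by (auto simp: take_map)
  next
    case Down
    then have "p \<in> set (filter (\<lambda>p. snd p = Down) (zip w v))" using p set_take_subset by fastforce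
    then show ?thesis using p by auto
  qed
qed

lemma il2: "length w = length v \<Longrightarrow> set (take N w) \<subseteq> set (upl (zip w v)) \<union> set (take N (dnl (zip w v)))"
proof
  fix x assume l: "length w = length v" and x: "x \<in> set (take N w)"
  have "w = map fst (zip w v)" using l by simp
  then have "x \<in> fst ` set (take N (zip w v))" using x by (metis set_map take_map)
  then obtain p where p: "p \<in> set (take N (zip w v))" "x = fst p" by blast
  show "x \<in> set (upl (zip w v)) \<union> set (take N (dnl (zip w v)))"
  proof (cases "snd p")
    case Down
    then have "p \<in> set (take N (filter (\<lambda>p. snd p = Down) (zip w v)))" using take_filter_in p by metis
    then show ?thesis using p by (auto simp: take_map)
  next
    case Up
    then have "p \<in> set (filter (\<lambda>p. snd p = Up) (zip w v))" using p set_take_subset by fastforce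
    then show ?thesis using p by auto
  qed
qed




definition x1 :: "nat \<Rightarrow> sym list" where
  "x1 n = replicate n a @ [Hash] @ concat (replicate n [b, c])"
definition x2 :: "nat \<Rightarrow> sym list" where
  "x2 n = concat (replicate n [d, e]) @ [Hash] @ replicate n f"

lemma len_crep[simp]: "length (concat (replicate n y)) = n * length y"
  by (induction n) auto
lemma set_crep: "set (concat (replicate n y)) \<subseteq> set y"
  by (induction n) auto

lemma len_x1: "length (x1 n) = 3 * n + 1" by (simp add: x1_def)
lemma len_x2: "length (x2 n) = 3 * n + 1" by (simp add: x2_def)

lemma L_ex_alt: "L_ex = {x1 n | n. n \<ge> 1} \<union> {x2 n | n. n \<ge> 1}"
  by (simp add: L_ex_def x1_def x2_def)

lemma Lex_cnt: "y \<in> L_ex \<Longrightarrow>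
   (\<exists>m\<ge>1. cnt a y = m \<and> cnt b y = m \<and> cnt c y = m \<and> cnt d y = 0 \<and> cnt e y = 0 \<and> cnt f y = 0) \<or>
   (\<exists>m\<ge>1. cnt a y = 0 \<and> cnt b y = 0 \<and> cnt c y = 0 \<and> cnt d y = m \<and> cnt e y = m \<and> cnt f y = m)"
  by (auto simp: L_ex_alt x1_def x2_def)

lemma sg_pos: "sg \<noteq> [] \<Longrightarrow> set sg \<subseteq> {p, q} \<Longrightarrow> cnt p sg + cnt q sg > 0"
proof -
  assume "sg \<noteq> []" "set sg \<subseteq> {p, q}"
  then have h: "hd sg \<in> set sg" by simp
  then have "hd sg \<in> {p, q}" using \<open>set sg \<subseteq> {p, q}\<close> by blast
  note h = h this
  then show ?thesis using cnt_pos[of "hd sg" sg] by (cases "hd sg = p") auto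
qed

lemma sg_zero: "set sg \<subseteq> S \<Longrightarrow> s \<notin> S \<Longrightarrow> cnt s sg = 0"
  by (rule cnt_zero) (rule contra_subsetD)

lemma cx1: "cnt a (x1 n) = n \<and> cnt b (x1 n) = n \<and> cnt c (x1 n) = n \<and> cnt d (x1 n) = 0 \<and> cnt f (x1 n) = 0"
  by (simp add: x1_def)
lemma cx2: "cnt a (x2 n) = 0 \<and> cnt d (x2 n) = n \<and> cnt e (x2 n) = n \<and> cnt f (x2 n) = n"
  by (simp add: x2_def)

lemma contra_x1a: "y \<in> L_ex \<Longrightarrow> sg \<noteq> [] \<Longrightarrow> set sg \<subseteq> {a} \<Longrightarrow> \<forall>s. cnt s (x1 n) = cnt s y + cnt s sg \<Longrightarrow> n \<ge> 1 \<Longrightarrow> False"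
proof -
  assume y: "y \<in> L_ex" and ne: "sg \<noteq> []" and ss: "set sg \<subseteq> {a}" and eq: "\<forall>s. cnt s (x1 n) = cnt s y + cnt s sg" and n: "n \<ge> 1"
  have 1: "cnt a sg > 0" using sg_pos[OF ne, of a a] ss by simp
  have 2: "cnt b sg = 0" using sg_zero[OF ss, of b] by simp
  have 3: "n = cnt a y + cnt a sg" "n = cnt b y + cnt b sg" using eq cx1[of n] by simp_all
  show False using Lex_cnt[OF y] proof (elim disjE exE conjE)
  qed (use 1 2 3 n in linarith)+
qed

lemma contra_x1bc: "y \<in> L_ex \<Longrightarrow> sg \<noteq> [] \<Longrightarrow> set sg \<subseteq> {b, c} \<Longrightarrow> \<forall>s. cnt s (x1 n) = cnt s y + cnt s sg \<Longrightarrow> n \<ge> 1 \<Longrightarrow> False"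
proof -
  assume y: "y \<in> L_ex" and ne: "sg \<noteq> []" and ss: "set sg \<subseteq> {b, c}" and eq: "\<forall>s. cnt s (x1 n) = cnt s y + cnt s sg" and n: "n \<ge> 1"
  have 1: "cnt b sg + cnt c sg > 0" using sg_pos[OF ne ss] by simp
  have 2: "cnt a sg = 0" using sg_zero[OF ss, of a] by simp
  have 3: "n = cnt a y + cnt a sg" "n = cnt b y + cnt b sg" "n = cnt c y + cnt c sg" using eq cx1[of n] by simp_all
  show False using Lex_cnt[OF y] proof (elim disjE exE conjE)
  qed (use 1 2 3 n in linarith)+
qed

lemma contra_x2de: "y \<in> L_ex \<Longrightarrow> sg \<noteq> [] \<Longrightarrow> set sg \<subseteq> {d, e} \<Longrightarrow> \<forall>s. cnt s (x2 n) = cnt s y + cnt s sg \<Longrightarrow> n \<ge> 1 \<Longrightarrow> False"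
proof -
  assume y: "y \<in> L_ex" and ne: "sg \<noteq> []" and ss: "set sg \<subseteq> {d, e}" and eq: "\<forall>s. cnt s (x2 n) = cnt s y + cnt s sg" and n: "n \<ge> 1"
  have 1: "cnt d sg + cnt e sg > 0" using sg_pos[OF ne ss] by simp
  have 2: "cnt f sg = 0" using sg_zero[OF ss, of f] by simp
  have 3: "n = cnt f y + cnt f sg" "n = cnt d y + cnt d sg" "n = cnt e y + cnt e sg" using eq cx2[of n] by simp_all
  show False using Lex_cnt[OF y] proof (elim disjE exE conjE)
  qed (use 1 2 3 n in linarith)+
qed

lemma contra_x2f: "y \<in> L_ex \<Longrightarrow> sg \<noteq> [] \<Longrightarrow> set sg \<subseteq> {f} \<Longrightarrow> \<forall>s. cnt s (x2 n) = cnt s y + cnt s sg \<Longrightarrow> n \<ge> 1 \<Longrightarrow> False"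
proof -
  assume y: "y \<in> L_ex" and ne: "sg \<noteq> []" and ss: "set sg \<subseteq> {f}" and eq: "\<forall>s. cnt s (x2 n) = cnt s y + cnt s sg" and n: "n \<ge> 1"
  have 1: "cnt f sg > 0" using sg_pos[OF ne, of f f] ss by simp
  have 2: "cnt d sg = 0" using sg_zero[OF ss, of d] by simp
  have 3: "n = cnt f y + cnt f sg" "n = cnt d y + cnt d sg" using eq cx2[of n] by simp_all
  show False using Lex_cnt[OF y] proof (elim disjE exE conjE)
  qed (use 1 2 3 n in linarith)+
qed

lemma split_fold: "rev U @ D = P @ Q \<Longrightarrow> length U = length P \<Longrightarrow> U = rev P \<and> D = Q"
  by (simp add: append_eq_append_conv) (metis rev_rev_ident)




lemma fam1:
  assumes H: "L_ex = F_lang L1 L2" and D: "delprop L1 L2 N"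
    and wv: "w \<in> L1" "v \<in> L2" "length w = length v" and x: "the (fold_h w v) = x1 n" and n: "n \<ge> 1"
  shows "n < length (upl (zip w v)) + N \<and> length (upl (zip w v)) < n + 1 + N"
proof -
  define U where "U = upl (zip w v)"
  define Dn where "Dn = dnl (zip w v)"
  define k where "k = length U"
  have xe: "rev U @ Dn = x1 n" using x fold_h_eq[OF wv(3)] U_def Dn_def by simp
  have lw: "length w = 3*n+1" using len_fold[OF wv(3)] x len_x1 by simp
  have ck: "\<forall>s. cnt s w = cnt s (x1 n)" using cnt_fold[OF wv(3)] x by simp
  have kle: "k \<le> 3*n+1" using arg_cong[OF xe, of length] len_x1 k_def by simp
  define bcs where "bcs = concat (replicate n [b, c])"
  have lbcs: "length bcs = 2*n" by (simp add: bcs_def)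
  have sbcs: "set bcs \<subseteq> {b, c}" using set_crep[of n "[b,c]"] bcs_def by simp
  have x1e: "x1 n = replicate n a @ [Hash] @ bcs" by (simp add: x1_def bcs_def)
  have A: False if kb: "n + 1 + N \<le> k"
  proof -
    define j where "j = k - n - 1"
    have jl: "N \<le> j" "j \<le> 2*n" using kb kle j_def by auto
    have "x1 n = (replicate n a @ [Hash] @ take j bcs) @ drop j bcs" using x1e by simp
    moreover have "length U = length (replicate n a @ [Hash] @ take j bcs)"
      using jl lbcs j_def k_def kb by simp
    ultimately have UD: "U = rev (replicate n a @ [Hash] @ take j bcs)" "Dn = drop j bcs"
      using split_fold xe by metis+
    have "take N U = take N (rev (take j bcs))" using UD jl lbcs by simp
    moreover have "set (take N (rev (take j bcs))) \<subseteq> set bcs"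
      by (metis set_rev set_take_subset subset_trans)
    ultimately have s1: "set (take N U) \<subseteq> {b, c}" using sbcs by auto
    have s2: "set Dn \<subseteq> {b, c}" using UD sbcs set_drop_subset by fastforce
    have ss: "set (take N w) \<subseteq> {b, c}" using il1[OF wv(3), of N] s1 s2 U_def Dn_def by blast
    have "N \<le> length w" using jl lw by simp
    then obtain y sg where "y \<in> L_ex" "sg \<noteq> []" "set sg \<subseteq> set (take N w)" "\<forall>s. cnt s w = cnt s y + cnt s sg"
      using del_L[OF H D wv] by blast
    then show False using contra_x1bc[of y sg n] ck n ss by auto
  qed
  have B: False if kb: "k + N \<le> n"
  proof -
    have "x1 n = replicate k a @ (replicate (n - k) a @ [Hash] @ bcs)"
      using x1e kb by (simp add: replicate_add[symmetric])
    moreover have "length U = length (replicate k a)" using k_def by simp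
    ultimately have UD: "U = rev (replicate k a)" "Dn = replicate (n - k) a @ [Hash] @ bcs"
      using split_fold xe by metis+
    have s1: "set U \<subseteq> {a}" using UD by (simp add: set_replicate_conv_if)
    have "take N Dn = replicate N a" using UD kb by simp
    then have s2: "set (take N Dn) \<subseteq> {a}" by (simp add: set_replicate_conv_if)
    have ss: "set (take N w) \<subseteq> {a}" using il2[OF wv(3), of N] s1 s2 U_def Dn_def by blast
    have "N \<le> length w" using kb lw by simp
    then obtain y sg where "y \<in> L_ex" "sg \<noteq> []" "set sg \<subseteq> set (take N w)" "\<forall>s. cnt s w = cnt s y + cnt s sg"
      using del_L[OF H D wv] by blast
    then show False using contra_x1a[of y sg n] ck n ss by auto
  qed
  have "\<not> (n + 1 + N \<le> k)" "\<not> (k + N \<le> n)" using A B by blast+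
  then show ?thesis unfolding k_def U_def by linarith
qed

lemma fam2:
  assumes H: "L_ex = F_lang L1 L2" and D: "delprop L1 L2 N"
    and wv: "w \<in> L1" "v \<in> L2" "length w = length v" and x: "the (fold_h w v) = x2 n" and n: "n \<ge> 1"
  shows "2 * n < length (upl (zip w v)) + N"
proof -
  define U where "U = upl (zip w v)"
  define Dn where "Dn = dnl (zip w v)"
  define k where "k = length U"
  have xe: "rev U @ Dn = x2 n" using x fold_h_eq[OF wv(3)] U_def Dn_def by simp
  have lw: "length w = 3*n+1" using len_fold[OF wv(3)] x len_x2 by simp
  have ck: "\<forall>s. cnt s w = cnt s (x2 n)" using cnt_fold[OF wv(3)] x by simp
  define des where "des = concat (replicate n [d, e])"
  have ldes: "length des = 2*n" by (simp add: des_def)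
  have sdes: "set des \<subseteq> {d, e}" using set_crep[of n "[d,e]"] des_def by simp
  have x2e: "x2 n = des @ [Hash] @ replicate n f" by (simp add: x2_def des_def)
  have B: False if kb: "k + N \<le> 2 * n"
  proof -
    have "x2 n = take k des @ (drop k des @ [Hash] @ replicate n f)"
      using x2e by simp
    moreover have "length U = length (take k des)" using k_def kb ldes by simp
    ultimately have UD: "U = rev (take k des)" "Dn = drop k des @ [Hash] @ replicate n f"
      using split_fold xe by metis+
    have s1: "set U \<subseteq> {d, e}" using UD sdes set_take_subset by fastforce
    have "take N Dn = take N (drop k des)" using UD kb ldes by simp
    then have s2: "set (take N Dn) \<subseteq> {d, e}" using sdes
      by (metis set_drop_subset set_take_subset subset_trans)
    have ss: "set (take N w) \<subseteq> {d, e}" using il2[OF wv(3), of N] s1 s2 U_def Dn_def by blast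
    have "N \<le> length w" using kb lw by simp
    then obtain y sg where "y \<in> L_ex" "sg \<noteq> []" "set sg \<subseteq> set (take N w)" "\<forall>s. cnt s w = cnt s y + cnt s sg"
      using del_L[OF H D wv] by blast
    then show False using contra_x2de[of y sg n] ck n ss by auto
  qed
  have "\<not> (k + N \<le> 2 * n)" using B by blast
  then show ?thesis unfolding k_def U_def by linarith
qed

lemma not_F: "L_ex \<notin> (F_REG_REG :: sym list set set)"
proof
  assume "L_ex \<in> (F_REG_REG :: sym list set set)"
  then obtain L1 L2 where r: "regular L1" "regular L2" and H: "L_ex = F_lang L1 L2"
    unfolding F_REG_REG_def by blast
  define N where "N = card (Qs L1 \<times> Qs L2)"
  have D: "delprop L1 L2 N" unfolding N_def by (rule del[OF regular_finite_Qs[OF r(1)] regular_finite_Qs[OF r(2)]])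
  define n where "n = 2 * N + 1"
  have n1: "n \<ge> 1" by (simp add: n_def)
  have "x1 n \<in> L_ex" using n1 unfolding L_ex_alt by blast
  then have "x1 n \<in> F_lang L1 L2" using H by simp
  then obtain w1 v1 where w1': "w1 \<in> L1" "v1 \<in> L2" "length w1 = length v1" "x1 n = the (fold_h w1 v1)"
    unfolding F_lang_def by blast
  note w1 = w1'(1-3) w1'(4)[symmetric]
  have "x2 n \<in> L_ex" using n1 unfolding L_ex_alt by blast
  then have "x2 n \<in> F_lang L1 L2" using H by simp
  then obtain w2 v2 where w2': "w2 \<in> L1" "v2 \<in> L2" "length w2 = length v2" "x2 n = the (fold_h w2 v2)"
    unfolding F_lang_def by blast
  note w2 = w2'(1-3) w2'(4)[symmetric]
  have l1: "length w1 = 3 * n + 1" using len_fold[OF w1(3)] w1(4) len_x1 by simp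
  have l2: "length w2 = 3 * n + 1" using len_fold[OF w2(3)] w2(4) len_x2 by simp
  have l21: "length w2 = length v1" using l1 l2 w1(3) by simp
  have yL: "the (fold_h w2 v1) \<in> L_ex" using H w2(1) w1(2) l21 unfolding F_lang_def by blast
  have "cnt d (the (fold_h w2 v1)) = cnt d w2" using cnt_fold[OF l21] by simp
  also have "\<dots> = cnt d (x2 n)" using cnt_fold[OF w2(3)] w2(4) by simp
  also have "\<dots> = n" using cx2 by simp
  finally have cd: "cnt d (the (fold_h w2 v1)) = n" .
  have y2: "the (fold_h w2 v1) = x2 n"
  proof -
    from yL consider m where "the (fold_h w2 v1) = x1 m" | m where "the (fold_h w2 v1) = x2 m"
      unfolding L_ex_alt by blast
    then show ?thesis
    proof cases
      case 1
      then show ?thesis using cd cx1[of m] n1 by simp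
    next
      case 2
      then show ?thesis using cd cx2[of m] by simp
    qed
  qed
  have f1: "n < length (upl (zip w1 v1)) + N \<and> length (upl (zip w1 v1)) < n + 1 + N"
    using fam1[OF H D w1 n1] .
  have f2: "2 * n < length (upl (zip w2 v1)) + N"
    using fam2[OF H D w2(1) w1(2) l21 y2 n1] .
  have "length (upl (zip w1 v1)) = length (upl (zip w2 v1))"
    using len_up[OF w1(3)] len_up[OF l21] by simp
  then show False using f1 f2 n_def by linarith
qed




lemma crep_snoc: "concat (replicate (Suc n) y) = concat (replicate n y) @ y"
  by (induction n) auto

lemma x1_Suc: "[a] @ x1 n @ [b, c] = x1 (Suc n)"
  by (simp only: x1_def crep_snoc) simp
lemma x2_Suc: "[d, e] @ x2 n @ [f] = x2 (Suc n)"
  by (simp add: x2_def replicate_append_same)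

lemma gen_sound: "lin_gen G A w \<Longrightarrow>
   (A = 0 \<longrightarrow> w \<in> L_ex) \<and> (A = 1 \<longrightarrow> (\<exists>n\<ge>1. w = x1 n)) \<and> (A = 2 \<longrightarrow> (\<exists>n\<ge>1. w = x2 n))"
proof (induction rule: lin_gen.induct)
  case (term_rule A u)
  then show ?case
    by (auto simp: G_def x1_def x2_def intro: exI[of _ 1])
next
  case (lin_rule A u B v w)
  from lin_rule.hyps(1) consider
      "A = 0" "u = []" "B = 1" "v = []" | "A = 0" "u = []" "B = 2" "v = []"
    | "A = 1" "u = [a]" "B = 1" "v = [b, c]" | "A = 2" "u = [d, e]" "B = 2" "v = [f]"
    by (auto simp: G_def)
  then show ?case
  proof cases
    case 1
    then show ?thesis using lin_rule.IH by (auto simp: L_ex_alt)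
  next
    case 2
    then show ?thesis using lin_rule.IH by (auto simp: L_ex_alt)
  next
    case 3
    then obtain n where "n \<ge> 1" "w = x1 n" using lin_rule.IH by auto
    then show ?thesis using 3 x1_Suc[of n] by (intro conjI impI; simp) (metis le_SucI)
  next
    case 4
    then obtain n where "n \<ge> 1" "w = x2 n" using lin_rule.IH by auto
    then show ?thesis using 4 x2_Suc[of n] by (intro conjI impI; simp) (metis le_SucI)
  qed
qed

lemma gen_x1: "n \<ge> 1 \<Longrightarrow> lin_gen G 1 (x1 n)"
proof (induction n)
  case 0
  then show ?case by simp
next
  case (Suc n)
  show ?case
  proof (cases "n = 0")
    case True
    have "lin_gen G 1 [a, Hash, b, c]" by (rule term_rule) (simp add: G_def)
    then show ?thesis using True by (simp add: x1_def)
  next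
    case False
    then have "lin_gen G 1 (x1 n)" using Suc by simp
    then have "lin_gen G 1 ([a] @ x1 n @ [b, c])" by (rule lin_rule[rotated]) (simp add: G_def)
    then show ?thesis by (simp only: x1_Suc)
  qed
qed

lemma gen_x2: "n \<ge> 1 \<Longrightarrow> lin_gen G 2 (x2 n)"
proof (induction n)
  case 0
  then show ?case by simp
next
  case (Suc n)
  show ?case
  proof (cases "n = 0")
    case True
    have "lin_gen G 2 [d, e, Hash, f]" by (rule term_rule) (simp add: G_def)
    then show ?thesis using True by (simp add: x2_def)
  next
    case False
    then have "lin_gen G 2 (x2 n)" using Suc by simp
    then have "lin_gen G 2 ([d, e] @ x2 n @ [f])" by (rule lin_rule[rotated]) (simp add: G_def)
    then show ?thesis by (simp only: x2_Suc)
  qed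
qed

lemma lin_eq: "lin_lang G 0 = L_ex"
proof (intro equalityI subsetI)
  fix w assume "w \<in> lin_lang G 0"
  then show "w \<in> L_ex" using gen_sound unfolding lin_lang_def by blast
next
  fix w assume "w \<in> L_ex"
  then consider n where "n \<ge> 1" "w = x1 n" | n where "n \<ge> 1" "w = x2 n"
    unfolding L_ex_alt by blast
  then show "w \<in> lin_lang G 0"
  proof cases
    case 1
    have "lin_gen G 0 ([] @ w @ [])"
      by (rule lin_rule[of 0 "[]" 1 "[]"]) (use gen_x1 1 in \<open>auto simp: G_def\<close>)
    then show ?thesis by (simp add: lin_lang_def)
  next
    case 2
    have "lin_gen G 0 ([] @ w @ [])"
      by (rule lin_rule[of 0 "[]" 2 "[]"]) (use gen_x2 2 in \<open>auto simp: G_def\<close>)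
    then show ?thesis by (simp add: lin_lang_def)
  qed
qed

theorem theorem2:
  shows "lin_lang G 0 = L_ex \<and> L_ex \<in> LIN \<and> L_ex \<notin> (F_REG_REG :: sym list set set)
         \<and> (F_REG_REG :: sym list set set) \<noteq> LIN"
proof -
  have fin: "finite G" by (simp add: G_def)
  have L: "L_ex \<in> LIN" unfolding LIN_def using lin_eq fin by blast
  show ?thesis using lin_eq L not_F by blast
qed


end
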